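(* Let $m,K$ be positive integers, and for $\ell\in\{1,\dots,K\}$ let $\mathbf B_\ell$ be a real $m\times s_\ell$ matrix. Let $\alpha\in\mathbb R$ and let $\boldsymbol\Sigma$ be any $m\times m$ symmetric nonnegative definite matrix such that $\mathrm{tr}(\mathbf B_\ell'\boldsymbol\Sigma\mathbf B_\ell)\le\alpha$ for all $\ell\in\{1,\dots,K\}$. Let $\mathbf w=(w_1,\dots,w_K)'\in\mathbb R^K$ have nonnegative components summing to $1$, and let $\mathbf N(\mathbf w)=\sum_{\ell=1}^K w_\ell\mathbf B_\ell\mathbf B_\ell'$. Let $\mathbf X$ be a real $m\times r$ matrix with $\mathcal C(\mathbf X)\subseteq\mathcal C(\mathbf N(\mathbf w))$. Then $$\mathrm{tr}(\mathbf X'\boldsymbol\Sigma\mathbf X)\le \alpha\,\lambda_{\max}\big(\mathbf X'\mathbf N^+(\mathbf w)\mathbf X\big).$$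
   Context: $\mathcal C(\cdot)$ denotes the column space of a matrix, $\mathbf A^+$ the Moore–Penrose pseudoinverse, $\mathbf A'$ the transpose, and $\lambda_{\max}$ the largest eigenvalue of a symmetric matrix. *)

theory Defs
  imports "Jordan_Normal_Form.Matrix" "Jordan_Normal_Form.Char_Poly"
begin

definition mtrace :: "'a :: comm_monoid_add mat \<Rightarrow> 'a" where
  "mtrace A = (\<Sum>i<dim_row A. A $$ (i, i))"

definition col_space :: "'a :: semiring_0 mat \<Rightarrow> 'a vec set" where
  "col_space A = {A *\<^sub>v x | x. x \<in> carrier_vec (dim_col A)}"

definition pinv :: "real mat \<Rightarrow> real mat" where
  "pinv A = (THE G. G \<in> carrier_mat (dim_col A) (dim_row A) \<and>
                    A * G * A = A \<and> G * A * G = G \<and>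
                    transpose_mat (A * G) = A * G \<and> transpose_mat (G * A) = G * A)"

definition sym_nnd :: "nat \<Rightarrow> real mat \<Rightarrow> bool" where
  "sym_nnd n S \<longleftrightarrow> S \<in> carrier_mat n n \<and> transpose_mat S = S \<and>
     (\<forall>v \<in> carrier_vec n. v \<bullet> (S *\<^sub>v v) \<ge> 0)"

text \<open>Largest eigenvalue (of a real symmetric matrix, whose eigenvalues are all real).\<close>
definition lambda_max :: "real mat \<Rightarrow> real" where
  "lambda_max A = Max {k. eigenvalue A k}"

definition Nmat :: "nat \<Rightarrow> nat \<Rightarrow> (nat \<Rightarrow> real) \<Rightarrow> (nat \<Rightarrow> real mat) \<Rightarrow> real mat" where
  "Nmat m K w B = mat m m (\<lambda>(i, j). \<Sum>l\<in>{1..K}. (w l \<cdot>\<^sub>m (B l * transpose_mat (B l))) $$ (i, j))"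

end

theory Submission
  imports Defs
begin
lemma disc_le:
  fixes p q s :: real
  assumes h: "\<And>t. 0 \<le> p + 2*t*q + t^2*s" and s: "0 \<le> s"
  shows "q^2 \<le> p*s"
proof (cases "s = 0")
  case True
  have "q = 0"
  proof (rule ccontr)
    assume q: "q \<noteq> 0"
    have "0 \<le> p + 2*(-(p+1)/(2*q))*q + (-(p+1)/(2*q))^2*s" by (rule h)
    also have "\<dots> = -1" using q True by (simp add: field_simps)
    finally show False by simp
  qed
  then show ?thesis using True h[of 0] by simp
next
  case False
  with s have s0: "s > 0" by simp
  have "0 \<le> p + 2*(-q/s)*q + (-q/s)^2*s" by (rule h)
  also have "\<dots> = p - q^2/s" using s0 by (simp add: field_simps power2_eq_square)
  finally have "q^2/s \<le> p" by simp
  then show ?thesis using s0 by (simp add: field_simps)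
qed

lemma wcs:
  fixes c a b :: "nat \<Rightarrow> real"
  assumes c: "\<And>i. i \<in> I \<Longrightarrow> 0 \<le> c i"
  shows "(\<Sum>i\<in>I. c i * a i * b i)^2 \<le> (\<Sum>i\<in>I. c i * a i ^ 2) * (\<Sum>i\<in>I. c i * b i ^ 2)"
proof -
  have "0 \<le> (\<Sum>i\<in>I. c i * a i ^ 2) + 2*t*(\<Sum>i\<in>I. c i * a i * b i) + t^2*(\<Sum>i\<in>I. c i * b i ^ 2)" for t
  proof -
    have "0 \<le> (\<Sum>i\<in>I. c i * (a i + t * b i)^2)"
      by (rule sum_nonneg) (use c in auto)
    also have "\<dots> = (\<Sum>i\<in>I. c i * a i ^ 2) + 2*t*(\<Sum>i\<in>I. c i * a i * b i) + t^2*(\<Sum>i\<in>I. c i * b i ^ 2)"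
      by (simp add: sum.distrib sum_distrib_left power2_eq_square algebra_simps)
    finally show ?thesis .
  qed
  moreover have "0 \<le> (\<Sum>i\<in>I. c i * b i ^ 2)" by (rule sum_nonneg) (use c in auto)
  ultimately show ?thesis by (rule disc_le)
qed

lemma cs_sum:
  fixes a b :: "nat \<Rightarrow> real"
  shows "(\<Sum>i\<in>I. a i * b i)^2 \<le> (\<Sum>i\<in>I. a i ^ 2) * (\<Sum>i\<in>I. b i ^ 2)"
  using wcs[of I "\<lambda>_. 1" a b] by simp

definition ON :: "nat \<Rightarrow> nat \<Rightarrow> (nat \<Rightarrow> real vec) \<Rightarrow> bool" where
  "ON n k v \<longleftrightarrow> (\<forall>i<k. v i \<in> carrier_vec n) \<and> (\<forall>i<k. \<forall>j<k. v i \<bullet> v j = (if i = j then 1 else 0))"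

definition rk1 :: "nat \<Rightarrow> nat \<Rightarrow> (nat \<Rightarrow> real vec) \<Rightarrow> (nat \<Rightarrow> real) \<Rightarrow> real mat" where
  "rk1 n k v f = mat n n (\<lambda>(a,b). \<Sum>i<k. f i * (v i $ a) * (v i $ b))"

lemma rk1_carrier[simp]: "rk1 n k v f \<in> carrier_mat n n"
  by (simp add: rk1_def)

lemma rk1_dims[simp]: "dim_row (rk1 n k v f) = n" "dim_col (rk1 n k v f) = n"
  by (simp_all add: rk1_def)

lemma rk1_transpose[simp]: "transpose_mat (rk1 n k v f) = rk1 n k v f"
  by (rule eq_matI) (auto simp: rk1_def mult.commute mult.left_commute)

lemma rk1_mult_vec:
  assumes x: "x \<in> carrier_vec n" and v: "\<And>i. i < k \<Longrightarrow> v i \<in> carrier_vec n"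
  shows "rk1 n k v f *\<^sub>v x = vec n (\<lambda>a. \<Sum>i<k. f i * (v i \<bullet> x) * v i $ a)"
proof (rule eq_vecI)
  fix a assume a: "a < dim_vec (vec n (\<lambda>a. \<Sum>i<k. f i * (v i \<bullet> x) * v i $ a))"
  hence a: "a < n" by simp
  have "(rk1 n k v f *\<^sub>v x) $ a = (\<Sum>b<n. (\<Sum>i<k. f i * (v i $ a) * (v i $ b)) * x $ b)"
    using a x by (simp add: rk1_def scalar_prod_def row_def lessThan_atLeast0)
  also have "\<dots> = (\<Sum>i<k. \<Sum>b<n. f i * (v i $ a) * (v i $ b) * x $ b)"
    by (simp add: sum_distrib_right sum.swap[of _ "{..<n}"])
  also have "\<dots> = (\<Sum>i<k. f i * (v i \<bullet> x) * v i $ a)"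
  proof (rule sum.cong[OF refl])
    fix i assume "i \<in> {..<k}"
    hence "v i \<in> carrier_vec n" using v by auto
    thus "(\<Sum>b<n. f i * (v i $ a) * (v i $ b) * x $ b) = f i * (v i \<bullet> x) * v i $ a"
      using x by (simp add: scalar_prod_def sum_distrib_left lessThan_atLeast0 mult_ac)
  qed
  finally show "(rk1 n k v f *\<^sub>v x) $ a = vec n (\<lambda>a. \<Sum>i<k. f i * (v i \<bullet> x) * v i $ a) $ a"
    using a by simp
qed (simp add: rk1_def)

lemma dot_lincomb:
  fixes y :: "real vec" and g :: "nat \<Rightarrow> real"
  assumes y: "y \<in> carrier_vec n" and v: "\<And>i. i < k \<Longrightarrow> v i \<in> carrier_vec n"
  shows "y \<bullet> vec n (\<lambda>a. \<Sum>i<k. g i * v i $ a) = (\<Sum>i<k. g i * (y \<bullet> v i))"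
proof -
  have "y \<bullet> vec n (\<lambda>a. \<Sum>i<k. g i * v i $ a) = (\<Sum>a<n. y $ a * (\<Sum>i<k. g i * v i $ a))"
    using y by (simp add: scalar_prod_def lessThan_atLeast0)
  also have "\<dots> = (\<Sum>a<n. \<Sum>i<k. y $ a * (g i * v i $ a))" by (simp add: sum_distrib_left)
  also have "\<dots> = (\<Sum>i<k. \<Sum>a<n. y $ a * (g i * v i $ a))" by (rule sum.swap)
  also have "\<dots> = (\<Sum>i<k. g i * (y \<bullet> v i))"
  proof (rule sum.cong[OF refl])
    fix i assume "i \<in> {..<k}"
    then have "dim_vec (v i) = n" using v by auto
    then show "(\<Sum>a<n. y $ a * (g i * v i $ a)) = g i * (y \<bullet> v i)"
      by (simp add: scalar_prod_def sum_distrib_left lessThan_atLeast0) (rule sum.cong, simp_all)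
  qed
  finally show ?thesis .
qed

lemma rk1_quad:
  assumes x: "x \<in> carrier_vec n" and y: "y \<in> carrier_vec n" and v: "\<And>i. i < k \<Longrightarrow> v i \<in> carrier_vec n"
  shows "y \<bullet> (rk1 n k v f *\<^sub>v x) = (\<Sum>i<k. f i * (v i \<bullet> x) * (v i \<bullet> y))"
proof -
  have "y \<bullet> (rk1 n k v f *\<^sub>v x) = (\<Sum>i<k. (f i * (v i \<bullet> x)) * (y \<bullet> v i))"
    using rk1_mult_vec[of x n k v f] x v dot_lincomb[where y=y and n=n and k=k and v=v, OF y v, where g="\<lambda>i. f i * (v i \<bullet> x)"] by (simp add: mult_ac)
  also have "\<dots> = (\<Sum>i<k. f i * (v i \<bullet> x) * (v i \<bullet> y))"
    by (rule sum.cong[OF refl]) (use v y in \<open>auto simp: comm_scalar_prod[of y n]\<close>)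
  finally show ?thesis .
qed

lemma ON_carrier: "ON n k v \<Longrightarrow> i < k \<Longrightarrow> v i \<in> carrier_vec n"
  by (simp add: ON_def)

lemma ON_dot: "ON n k v \<Longrightarrow> i < k \<Longrightarrow> j < k \<Longrightarrow> v i \<bullet> v j = (if i = j then 1 else 0)"
  by (simp add: ON_def)

lemma rk1_coef:
  assumes on: "ON n k v" and j: "j < k" and x: "x \<in> carrier_vec n"
  shows "v j \<bullet> (rk1 n k v f *\<^sub>v x) = f j * (v j \<bullet> x)"
proof -
  have "v j \<bullet> (rk1 n k v f *\<^sub>v x) = (\<Sum>i<k. f i * (v i \<bullet> x) * (v i \<bullet> v j))"
    by (rule rk1_quad[OF x]) (use on j in \<open>auto simp: ON_carrier\<close>)
  also have "\<dots> = (\<Sum>i<k. if i = j then f j * (v j \<bullet> x) else 0)"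
    by (rule sum.cong[OF refl]) (use on j in \<open>auto simp: ON_dot\<close>)
  also have "\<dots> = f j * (v j \<bullet> x)" using j by simp
  finally show ?thesis .
qed

lemma mat_eq_vec:
  fixes A B :: "real mat"
  assumes A: "A \<in> carrier_mat nr n" and B: "B \<in> carrier_mat nr n"
    and h: "\<And>x. x \<in> carrier_vec n \<Longrightarrow> A *\<^sub>v x = B *\<^sub>v x"
  shows "A = B"
proof (rule eq_matI)
  fix i j assume i: "i < dim_row B" and j: "j < dim_col B"
  have "A *\<^sub>v unit_vec n j = B *\<^sub>v unit_vec n j" by (rule h) simp
  hence "(A *\<^sub>v unit_vec n j) $ i = (B *\<^sub>v unit_vec n j) $ i" by simp
  thus "A $$ (i, j) = B $$ (i, j)" using A B i j by simp
qed (use A B in auto)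

lemma rk1_coef':
  assumes on: "ON n k v" and j: "j < k" and x: "x \<in> carrier_vec n"
  shows "(rk1 n k v f *\<^sub>v x) \<bullet> v j = f j * (v j \<bullet> x)"
  using rk1_coef[OF on j x] comm_scalar_prod[of "v j" n] on j x
  by (metis ON_carrier mult_mat_vec_carrier rk1_carrier)

lemma rk1_mult:
  assumes on: "ON n k v"
  shows "rk1 n k v f * rk1 n k v g = rk1 n k v (\<lambda>i. f i * g i)"
proof (rule mat_eq_vec[of _ n n])
  fix x :: "real vec" assume x: "x \<in> carrier_vec n"
  have v: "\<And>i. i < k \<Longrightarrow> v i \<in> carrier_vec n" using on by (simp add: ON_carrier)
  have gx: "rk1 n k v g *\<^sub>v x \<in> carrier_vec n" using x by (rule mult_mat_vec_carrier[OF rk1_carrier])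
  have "rk1 n k v f * rk1 n k v g *\<^sub>v x = rk1 n k v f *\<^sub>v (rk1 n k v g *\<^sub>v x)"
    using x by (simp add: assoc_mult_mat_vec[of _ n n _ n])
  also have "\<dots> = vec n (\<lambda>a. \<Sum>i<k. f i * (v i \<bullet> (rk1 n k v g *\<^sub>v x)) * v i $ a)"
    by (rule rk1_mult_vec[OF gx v])
  also have "\<dots> = vec n (\<lambda>a. \<Sum>i<k. (f i * g i) * (v i \<bullet> x) * v i $ a)"
    by (rule eq_vecI) (auto intro!: sum.cong simp: rk1_coef[OF on _ x])
  also have "\<dots> = rk1 n k v (\<lambda>i. f i * g i) *\<^sub>v x"
    by (rule rk1_mult_vec[OF x v, symmetric])
  finally show "rk1 n k v f * rk1 n k v g *\<^sub>v x = rk1 n k v (\<lambda>i. f i * g i) *\<^sub>v x" .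
qed auto

lemma ON_complete:
  assumes on: "ON n n v"
  shows "rk1 n n v (\<lambda>_. 1) = 1\<^sub>m n"
proof -
  define U where "U = mat n n (\<lambda>(a,i). v i $ a)"
  have U: "U \<in> carrier_mat n n" by (simp add: U_def)
  have colU: "col U j = v j" if j: "j < n" for j
  proof -
    have "dim_vec (v j) = n" using ON_carrier[OF on j] by simp
    then show ?thesis using j unfolding U_def by (intro eq_vecI) simp_all
  qed
  have "transpose_mat U * U = 1\<^sub>m n"
  proof (rule eq_matI)
    fix i j assume i: "i < dim_row (1\<^sub>m n)" and j: "j < dim_col (1\<^sub>m n)"
    have "(transpose_mat U * U) $$ (i,j) = row (transpose_mat U) i \<bullet> col U j"
      using i j U by simp
    also have "\<dots> = col U i \<bullet> col U j" using i U by simp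
    also have "\<dots> = v i \<bullet> v j" using i j colU by simp
    also have "\<dots> = 1\<^sub>m n $$ (i,j)" using on i j by (simp add: ON_dot)
    finally show "(transpose_mat U * U) $$ (i,j) = 1\<^sub>m n $$ (i,j)" .
  next
    show "dim_row (transpose_mat U * U) = dim_row (1\<^sub>m n)" using U by simp
  next
    show "dim_col (transpose_mat U * U) = dim_col (1\<^sub>m n)" using U by simp
  qed
  moreover have "transpose_mat U \<in> carrier_mat n n" using U by simp
  ultimately have UU: "U * transpose_mat U = 1\<^sub>m n"
    using mat_mult_left_right_inverse[of "transpose_mat U" n U] U by blast
  have rowU: "row U a = vec n (\<lambda>i. v i $ a)" if "a < n" for a
    using that unfolding U_def by (intro eq_vecI) simp_all
  show ?thesis
  proof (rule eq_matI)
    fix a b assume a: "a < dim_row (1\<^sub>m n)" and b: "b < dim_col (1\<^sub>m n)"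
    have "(U * transpose_mat U) $$ (a,b) = row U a \<bullet> col (transpose_mat U) b"
      using a b U by simp
    also have "\<dots> = row U a \<bullet> row U b" using b U by simp
    also have "\<dots> = (\<Sum>i<n. v i $ a * v i $ b)"
      using a b by (simp add: rowU scalar_prod_def lessThan_atLeast0)
    also have "\<dots> = rk1 n n v (\<lambda>_. 1) $$ (a,b)"
      using a b by (simp add: rk1_def)
    finally have eq: "(U * transpose_mat U) $$ (a,b) = rk1 n n v (\<lambda>_. 1) $$ (a,b)" .
    show "rk1 n n v (\<lambda>_. 1) $$ (a,b) = 1\<^sub>m n $$ (a,b)" using eq[unfolded UU] by metis
  qed simp_all
qed

lemma ON_expand:
  assumes on: "ON n n v" and x: "x \<in> carrier_vec n"
  shows "x = vec n (\<lambda>a. \<Sum>i<n. (v i \<bullet> x) * v i $ a)"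
proof -
  have "x = rk1 n n v (\<lambda>_. 1) *\<^sub>v x" using ON_complete[OF on] x by simp
  also have "\<dots> = vec n (\<lambda>a. \<Sum>i<n. 1 * (v i \<bullet> x) * v i $ a)"
    by (rule rk1_mult_vec[OF x]) (use on in \<open>simp add: ON_carrier\<close>)
  finally show ?thesis by simp
qed

lemma rk1_quad_sq:
  assumes on: "ON n k v" and x: "x \<in> carrier_vec n"
  shows "x \<bullet> (rk1 n k v f *\<^sub>v x) = (\<Sum>i<k. f i * (v i \<bullet> x)^2)"
  using rk1_quad[OF x x, of k v f] on by (simp add: ON_carrier power2_eq_square mult_ac)

lemma parseval:
  assumes on: "ON n n v" and x: "x \<in> carrier_vec n"
  shows "x \<bullet> x = (\<Sum>i<n. (v i \<bullet> x)^2)"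
proof -
  have "x \<bullet> x = x \<bullet> (rk1 n n v (\<lambda>_. 1) *\<^sub>v x)" using ON_complete[OF on] x by simp
  also have "\<dots> = (\<Sum>i<n. (v i \<bullet> x)^2)" using rk1_quad_sq[OF on x] by simp
  finally show ?thesis .
qed

lemma ON_zero:
  assumes on: "ON n n v" and x: "x \<in> carrier_vec n" and z: "\<And>i. i < n \<Longrightarrow> v i \<bullet> x = 0"
  shows "x = 0\<^sub>v n"
proof -
  have "x = vec n (\<lambda>a. \<Sum>i<n. (v i \<bullet> x) * v i $ a)" by (rule ON_expand[OF on x])
  also have "\<dots> = 0\<^sub>v n" using z by (auto intro!: eq_vecI)
  finally show ?thesis .
qed

lemma dot_self: "(x :: real vec) \<in> carrier_vec n \<Longrightarrow> x \<bullet> x = (\<Sum>a<n. (x $ a)^2)"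
  by (simp add: scalar_prod_def lessThan_atLeast0 power2_eq_square)

lemma dot_nonneg: "0 \<le> (x :: real vec) \<bullet> x"
  by (simp add: scalar_prod_def sum_nonneg)

lemma dot_zero_iff:
  assumes x: "(x :: real vec) \<in> carrier_vec n"
  shows "x \<bullet> x = 0 \<longleftrightarrow> x = 0\<^sub>v n"
proof
  assume h: "x \<bullet> x = 0"
  have "\<forall>a\<in>{..<n}. (x $ a)^2 = 0"
    using h x by (subst sum_nonneg_eq_0_iff[symmetric]) (auto simp: dot_self)
  thus "x = 0\<^sub>v n" using x by (intro eq_vecI) auto
qed (use x in simp)

lemma two_dot_le:
  assumes x: "(x :: real vec) \<in> carrier_vec n" and y: "y \<in> carrier_vec n"
  shows "2 * (x \<bullet> y) \<le> x \<bullet> x + y \<bullet> y" and "- 2 * (x \<bullet> y) \<le> x \<bullet> x + y \<bullet> y"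
proof -
  have e1: "x \<bullet> x + y \<bullet> y - 2 * (x \<bullet> y) = (\<Sum>a<n. (x $ a - y $ a)^2)"
    using x y by (simp add: scalar_prod_def lessThan_atLeast0 power2_eq_square sum_subtractf[symmetric]
        sum.distrib[symmetric] sum_distrib_left algebra_simps)
  have e2: "x \<bullet> x + y \<bullet> y + 2 * (x \<bullet> y) = (\<Sum>a<n. (x $ a + y $ a)^2)"
    using x y by (simp add: scalar_prod_def lessThan_atLeast0 power2_eq_square
        sum.distrib[symmetric] sum_distrib_left algebra_simps)
  have "0 \<le> (\<Sum>a<n. (x $ a - y $ a)^2)" by (rule sum_nonneg) simp
  with e1 show "2 * (x \<bullet> y) \<le> x \<bullet> x + y \<bullet> y" by simp
  have "0 \<le> (\<Sum>a<n. (x $ a + y $ a)^2)" by (rule sum_nonneg) simp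
  with e2 show "- 2 * (x \<bullet> y) \<le> x \<bullet> x + y \<bullet> y" by simp
qed

definition Fr :: "real mat \<Rightarrow> real" where
  "Fr M = (\<Sum>a<dim_row M. \<Sum>b<dim_col M. (M $$ (a,b))^2)"

lemma Fr_nonneg: "0 \<le> Fr M"
  unfolding Fr_def by (intro sum_nonneg) simp

lemma mv_bound:
  assumes M: "(M :: real mat) \<in> carrier_mat nr nc" and x: "x \<in> carrier_vec nc"
  shows "(M *\<^sub>v x) \<bullet> (M *\<^sub>v x) \<le> Fr M * (x \<bullet> x)"
proof -
  have "(M *\<^sub>v x) \<bullet> (M *\<^sub>v x) = (\<Sum>a<nr. ((M *\<^sub>v x) $ a)^2)"
    using M x by (intro dot_self) simp
  also have "\<dots> = (\<Sum>a<nr. (\<Sum>b<nc. M $$ (a,b) * x $ b)^2)"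
    using M x by (intro sum.cong refl) (simp add: scalar_prod_def row_def lessThan_atLeast0)
  also have "\<dots> \<le> (\<Sum>a<nr. (\<Sum>b<nc. (M $$ (a,b))^2) * (\<Sum>b<nc. (x $ b)^2))"
    by (intro sum_mono cs_sum)
  also have "\<dots> = Fr M * (x \<bullet> x)"
    using M x by (simp add: Fr_def dot_self[OF x] sum_distrib_right)
  finally show ?thesis .
qed

lemma sym_dot:
  fixes A :: "real mat"
  assumes A: "A \<in> carrier_mat n n" and sym: "transpose_mat A = A"
    and x: "x \<in> carrier_vec n" and y: "y \<in> carrier_vec n"
  shows "x \<bullet> (A *\<^sub>v y) = y \<bullet> (A *\<^sub>v x)"
proof -
  have "(transpose_mat A *\<^sub>v y) \<bullet> x = y \<bullet> (A *\<^sub>v x)"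
    by (rule transpose_vec_mult_scalar[OF A x y])
  hence "(A *\<^sub>v y) \<bullet> x = y \<bullet> (A *\<^sub>v x)" using sym by simp
  moreover have "x \<bullet> (A *\<^sub>v y) = (A *\<^sub>v y) \<bullet> x"
    by (rule comm_scalar_prod[of _ n]) (use A x y in auto)
  ultimately show ?thesis by simp
qed

lemma quad_expand:
  fixes A :: "real mat"
  assumes A: "A \<in> carrier_mat n n" and sym: "transpose_mat A = A"
    and u: "u \<in> carrier_vec n" and w: "w \<in> carrier_vec n"
  shows "(u + t \<cdot>\<^sub>v w) \<bullet> (A *\<^sub>v (u + t \<cdot>\<^sub>v w)) =
     u \<bullet> (A *\<^sub>v u) + 2 * t * (w \<bullet> (A *\<^sub>v u)) + t^2 * (w \<bullet> (A *\<^sub>v w))"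
proof -
  have Au: "A *\<^sub>v u \<in> carrier_vec n" and Aw: "A *\<^sub>v w \<in> carrier_vec n" using A u w by auto
  have tw: "t \<cdot>\<^sub>v w \<in> carrier_vec n" using w by simp
  have "A *\<^sub>v (u + t \<cdot>\<^sub>v w) = A *\<^sub>v u + t \<cdot>\<^sub>v (A *\<^sub>v w)"
    using A u w by (simp add: mult_add_distrib_mat_vec[OF A u tw] mult_mat_vec[OF A w])
  hence "(u + t \<cdot>\<^sub>v w) \<bullet> (A *\<^sub>v (u + t \<cdot>\<^sub>v w)) = (u + t \<cdot>\<^sub>v w) \<bullet> (A *\<^sub>v u + t \<cdot>\<^sub>v (A *\<^sub>v w))"
    by simp
  also have "\<dots> = u \<bullet> (A *\<^sub>v u) + t * (u \<bullet> (A *\<^sub>v w)) + (t * (w \<bullet> (A *\<^sub>v u)) + t * (t * (w \<bullet> (A *\<^sub>v w))))"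
    using u w Au Aw
    by (simp add: add_scalar_prod_distrib[of _ n] scalar_prod_add_distrib[of _ n])
  also have "u \<bullet> (A *\<^sub>v w) = w \<bullet> (A *\<^sub>v u)" by (rule sym_dot[OF A sym u w])
  finally show ?thesis by (simp add: power2_eq_square algebra_simps)
qed

lemma normalize_vec:
  assumes x: "(x :: real vec) \<in> carrier_vec n" and x0: "x \<noteq> 0\<^sub>v n"
  defines "c \<equiv> 1 / sqrt (x \<bullet> x)"
  shows "(c \<cdot>\<^sub>v x) \<bullet> (c \<cdot>\<^sub>v x) = 1" and "c \<cdot>\<^sub>v x \<in> carrier_vec n"
    and "\<And>z. z \<in> carrier_vec n \<Longrightarrow> z \<bullet> (c \<cdot>\<^sub>v x) = c * (z \<bullet> x)"
    and "c \<noteq> 0"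
proof -
  have pos: "x \<bullet> x > 0" using dot_nonneg[of x] dot_zero_iff[OF x] x0 by linarith
  show "(c \<cdot>\<^sub>v x) \<bullet> (c \<cdot>\<^sub>v x) = 1"
    using x pos by (simp add: c_def power2_eq_square[symmetric])
  show "c \<cdot>\<^sub>v x \<in> carrier_vec n" using x by simp
  show "\<And>z. z \<in> carrier_vec n \<Longrightarrow> z \<bullet> (c \<cdot>\<^sub>v x) = c * (z \<bullet> x)" using x by simp
  show "c \<noteq> 0" using pos by (simp add: c_def)
qed

lemma smult_zero_vec_real[simp]: "(t::real) \<cdot>\<^sub>v 0\<^sub>v n = 0\<^sub>v n"
  by (intro eq_vecI) auto

lemma ON_extend:
  assumes on: "ON n k v" and x: "x \<in> carrier_vec n" and xx: "x \<bullet> x = 1"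
    and orth: "\<And>i. i < k \<Longrightarrow> v i \<bullet> x = 0"
  shows "ON n (Suc k) (v(k := x))"
proof -
  have orth': "x \<bullet> v i = 0" if "i < k" for i
    using comm_scalar_prod[of x n "v i"] ON_carrier[OF on that] x orth[OF that] by simp
  show ?thesis unfolding ON_def
  proof (intro conjI allI impI)
    fix i assume "i < Suc k"
    then show "(v(k := x)) i \<in> carrier_vec n" using x ON_carrier[OF on] by (cases "i = k") auto
  next
    fix i j assume i: "i < Suc k" and j: "j < Suc k"
    show "(v(k := x)) i \<bullet> (v(k := x)) j = (if i = j then 1 else 0)"
    proof (cases "i = k")
      case True
      then show ?thesis using j xx orth' by (cases "j = k") auto
    next
      case False
      then have ik: "i < k" using i by simp
      then show ?thesis using j orth ON_dot[OF on ik] False by (cases "j = k") auto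
    qed
  qed
qed

lemma step:
  fixes A :: "real mat"
  assumes A: "A \<in> carrier_mat n n" and sym: "transpose_mat A = A"
    and on: "ON n k v" and ev: "\<And>i. i < k \<Longrightarrow> A *\<^sub>v v i = \<mu> i \<cdot>\<^sub>v v i" and kn: "k < n"
  shows "\<exists>x m. x \<in> carrier_vec n \<and> x \<bullet> x = 1 \<and> (\<forall>i<k. v i \<bullet> x = 0) \<and> A *\<^sub>v x = m \<cdot>\<^sub>v x"
proof -
  define P where "P = rk1 n k v (\<lambda>_. 1)"
  have P: "P \<in> carrier_mat n n" by (simp add: P_def)
  have vc: "v i \<in> carrier_vec n" if "i < k" for i using on that by (simp add: ON_carrier)
  have Px: "v j \<bullet> (P *\<^sub>v x) = v j \<bullet> x" if "x \<in> carrier_vec n" "j < k" for x j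
    using rk1_coef[OF on that(2) that(1)] by (simp add: P_def)
  have vA: "v j \<bullet> (A *\<^sub>v x) = \<mu> j * (v j \<bullet> x)" if j: "j < k" and x: "x \<in> carrier_vec n" for j x
  proof -
    have "v j \<bullet> (A *\<^sub>v x) = x \<bullet> (A *\<^sub>v v j)" by (rule sym_dot[OF A sym vc[OF j] x])
    also have "\<dots> = x \<bullet> (\<mu> j \<cdot>\<^sub>v v j)" using ev j by simp
    also have "\<dots> = \<mu> j * (x \<bullet> v j)" using vc[OF j] x by simp
    also have "x \<bullet> v j = v j \<bullet> x" using comm_scalar_prod[of x n "v j"] vc[OF j] x by simp
    finally show ?thesis .
  qed
  define inC where "inC u \<longleftrightarrow> u \<in> carrier_vec n \<and> (\<forall>i<k. v i \<bullet> u = 0)" for u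
  have Pzero: "P *\<^sub>v u = 0\<^sub>v n" if "inC u" for u
  proof -
    have u: "u \<in> carrier_vec n" and o: "\<And>i. i < k \<Longrightarrow> v i \<bullet> u = 0" using that by (auto simp: inC_def)
    have "P *\<^sub>v u = vec n (\<lambda>a. \<Sum>i<k. 1 * (v i \<bullet> u) * v i $ a)"
      unfolding P_def by (rule rk1_mult_vec[OF u vc])
    also have "\<dots> = 0\<^sub>v n" using o by (intro eq_vecI) auto
    finally show ?thesis .
  qed
  have "\<exists>b. b \<in> carrier_vec n \<and> b \<noteq> 0\<^sub>v n \<and> (\<forall>i<k. v i \<bullet> b = 0)"
  proof -
    have tr: "(\<Sum>a<n. P $$ (a,a)) = real k"
    proof -
      have "(\<Sum>a<n. P $$ (a,a)) = (\<Sum>a<n. \<Sum>i<k. (v i $ a)^2)"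
        by (intro sum.cong refl) (simp add: P_def rk1_def power2_eq_square)
      also have "\<dots> = (\<Sum>i<k. \<Sum>a<n. (v i $ a)^2)" by (rule sum.swap)
      also have "\<dots> = (\<Sum>i<k. v i \<bullet> v i)"
        by (intro sum.cong refl) (simp add: dot_self[OF vc])
      also have "\<dots> = (\<Sum>i<k. 1)" using on by (intro sum.cong refl) (simp add: ON_dot)
      finally show ?thesis by simp
    qed
    have "\<exists>a<n. P $$ (a,a) \<noteq> 1"
    proof (rule ccontr)
      assume "\<not> (\<exists>a<n. P $$ (a,a) \<noteq> 1)"
      hence "(\<Sum>a<n. P $$ (a,a)) = (\<Sum>a<n. (1::real))" by (intro sum.cong) auto
      hence "real k = real n" using tr by simp
      thus False using kn by simp
    qed
    then obtain a where a: "a < n" "P $$ (a,a) \<noteq> 1" by blast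
    define e :: "real vec" where "e = unit_vec n a"
    define b where "b = e - P *\<^sub>v e"
    have e: "e \<in> carrier_vec n" by (simp add: e_def)
    have Pe: "P *\<^sub>v e \<in> carrier_vec n" using e P by simp
    have b: "b \<in> carrier_vec n" using e Pe by (simp add: b_def)
    have orth: "v i \<bullet> b = 0" if "i < k" for i
    proof -
      have "v i \<bullet> b = v i \<bullet> e - v i \<bullet> (P *\<^sub>v e)"
        unfolding b_def by (rule scalar_prod_minus_distrib[OF vc[OF that] e Pe])
      also have "\<dots> = 0" using Px[OF e that] by simp
      finally show ?thesis .
    qed
    have "e \<bullet> b = 1 - P $$ (a,a)"
    proof -
      have "e \<bullet> b = e \<bullet> e - e \<bullet> (P *\<^sub>v e)"
        unfolding b_def by (rule scalar_prod_minus_distrib[OF e e Pe])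
      also have "e \<bullet> e = 1" using a by (simp add: e_def)
      also have "e \<bullet> (P *\<^sub>v e) = (P *\<^sub>v e) $ a" using scalar_prod_left_unit[OF Pe a(1)] by (simp add: e_def)
      also have "\<dots> = P $$ (a,a)" using a P by (simp add: e_def)
      finally show ?thesis .
    qed
    hence "b \<noteq> 0\<^sub>v n" using a(2) e by auto
    thus ?thesis using b orth by blast
  qed
  then obtain b0 where b0: "b0 \<in> carrier_vec n" "b0 \<noteq> 0\<^sub>v n" "\<And>i. i < k \<Longrightarrow> v i \<bullet> b0 = 0" by blast
  define S where "S = {u \<bullet> (A *\<^sub>v u) | u. inC u \<and> u \<bullet> u = 1}"
  define c0 where "c0 = 1 / sqrt (b0 \<bullet> b0)"
  note nb = normalize_vec[OF b0(1) b0(2), folded c0_def]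
  have "inC (c0 \<cdot>\<^sub>v b0)" using nb(2,3) vc b0(3) by (auto simp: inC_def)
  hence Sne: "S \<noteq> {}" using nb(1) unfolding S_def by blast
  have Sbdd: "bdd_above S"
  proof (rule bdd_aboveI)
    fix y assume "y \<in> S"
    then obtain u where u: "inC u" "u \<bullet> u = 1" and y: "y = u \<bullet> (A *\<^sub>v u)" unfolding S_def by blast
    have uc: "u \<in> carrier_vec n" using u by (simp add: inC_def)
    have Au: "A *\<^sub>v u \<in> carrier_vec n" using A uc by simp
    have "2 * y \<le> u \<bullet> u + (A *\<^sub>v u) \<bullet> (A *\<^sub>v u)" using two_dot_le(1)[OF uc Au] y by simp
    also have "\<dots> \<le> 1 + Fr A * 1" using mv_bound[OF A uc] u by simp
    finally show "y \<le> (1 + Fr A) / 2" by simp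
  qed
  define s where "s = Sup S"
  have le_s: "u \<bullet> (A *\<^sub>v u) \<le> s * (u \<bullet> u)" if uC: "inC u" for u
  proof (cases "u = 0\<^sub>v n")
    case True
    then show ?thesis using A by simp
  next
    case False
    have uc: "u \<in> carrier_vec n" using uC by (simp add: inC_def)
    define c where "c = 1 / sqrt (u \<bullet> u)"
    note nu = normalize_vec[OF uc False, folded c_def]
    have pos: "u \<bullet> u > 0" using dot_nonneg[of u] dot_zero_iff[OF uc] False by linarith
    have "inC (c \<cdot>\<^sub>v u)" using nu(2,3) vc uC by (auto simp: inC_def)
    hence "(c \<cdot>\<^sub>v u) \<bullet> (A *\<^sub>v (c \<cdot>\<^sub>v u)) \<in> S" using nu(1) unfolding S_def by blast
    hence "(c \<cdot>\<^sub>v u) \<bullet> (A *\<^sub>v (c \<cdot>\<^sub>v u)) \<le> s" unfolding s_def using Sbdd by (rule cSup_upper)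
    moreover have "(c \<cdot>\<^sub>v u) \<bullet> (A *\<^sub>v (c \<cdot>\<^sub>v u)) = c^2 * (u \<bullet> (A *\<^sub>v u))"
      using A uc by (simp add: mult_mat_vec[OF A uc] power2_eq_square)
    moreover have "c^2 = 1 / (u \<bullet> u)" using pos by (simp add: c_def power_divide)
    ultimately have "(u \<bullet> (A *\<^sub>v u)) / (u \<bullet> u) \<le> s" by simp
    thus ?thesis using pos by (simp add: divide_le_eq mult.commute)
  qed
  define t where "t = 1 + \<bar>s\<bar> + (\<Sum>i<k. \<bar>\<mu> i\<bar>)"
  have tpos: "s - \<mu> j + t > 0" if "j < k" for j
  proof -
    have "\<bar>\<mu> j\<bar> \<le> (\<Sum>i<k. \<bar>\<mu> i\<bar>)" using that by (intro member_le_sum) auto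
    thus ?thesis unfolding t_def by linarith
  qed
  define E where "E = mat n n (\<lambda>(a,b). (if a = b then s else 0) - A $$ (a,b) + t * P $$ (a,b))"
  have E: "E \<in> carrier_mat n n" by (simp add: E_def)
  have E_apply: "E *\<^sub>v x = (s \<cdot>\<^sub>v x - A *\<^sub>v x) + t \<cdot>\<^sub>v (P *\<^sub>v x)" if x: "x \<in> carrier_vec n" for x
  proof (rule eq_vecI)
    fix a assume "a < dim_vec ((s \<cdot>\<^sub>v x - A *\<^sub>v x) + t \<cdot>\<^sub>v (P *\<^sub>v x))"
    hence a: "a < n" using P by simp
    have "(E *\<^sub>v x) $ a = (\<Sum>b<n. E $$ (a,b) * x $ b)"
      using a x E by (simp add: scalar_prod_def row_def lessThan_atLeast0)
    also have "\<dots> = (\<Sum>b<n. (if a = b then s * x $ b else 0) - A $$ (a,b) * x $ b + t * (P $$ (a,b) * x $ b))"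
      using a by (intro sum.cong refl) (simp add: E_def algebra_simps)
    also have "\<dots> = s * x $ a - (\<Sum>b<n. A $$ (a,b) * x $ b) + t * (\<Sum>b<n. P $$ (a,b) * x $ b)"
      using a by (simp add: sum.distrib sum_subtractf sum_distrib_left)
    also have "\<dots> = ((s \<cdot>\<^sub>v x - A *\<^sub>v x) + t \<cdot>\<^sub>v (P *\<^sub>v x)) $ a"
      using a x A P by (simp add: scalar_prod_def row_def lessThan_atLeast0)
    finally show "(E *\<^sub>v x) $ a = ((s \<cdot>\<^sub>v x - A *\<^sub>v x) + t \<cdot>\<^sub>v (P *\<^sub>v x)) $ a" .
  qed (use E A P x in simp)
  have vE: "v j \<bullet> (E *\<^sub>v x) = (s - \<mu> j + t) * (v j \<bullet> x)" if j: "j < k" and x: "x \<in> carrier_vec n" for j x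
  proof -
    have Ax: "A *\<^sub>v x \<in> carrier_vec n" using A x by simp
    have Pxc: "P *\<^sub>v x \<in> carrier_vec n" using P x by simp
    have "v j \<bullet> (E *\<^sub>v x) = v j \<bullet> (s \<cdot>\<^sub>v x - A *\<^sub>v x) + v j \<bullet> (t \<cdot>\<^sub>v (P *\<^sub>v x))"
      unfolding E_apply[OF x] using x Ax Pxc vc[OF j] by (intro scalar_prod_add_distrib[of _ n]) auto
    also have "v j \<bullet> (s \<cdot>\<^sub>v x - A *\<^sub>v x) = v j \<bullet> (s \<cdot>\<^sub>v x) - v j \<bullet> (A *\<^sub>v x)"
      using x Ax vc[OF j] by (intro scalar_prod_minus_distrib[of _ n]) auto
    also have "v j \<bullet> (s \<cdot>\<^sub>v x) = s * (v j \<bullet> x)" using x vc[OF j] by simp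
    also have "v j \<bullet> (t \<cdot>\<^sub>v (P *\<^sub>v x)) = t * (v j \<bullet> x)" using Px[OF x j] Pxc vc[OF j] by simp
    finally show ?thesis using vA[OF j x] by (simp add: algebra_simps)
  qed
  show ?thesis
  proof (cases "\<exists>x. x \<in> carrier_vec n \<and> x \<noteq> 0\<^sub>v n \<and> E *\<^sub>v x = 0\<^sub>v n")
    case True
    then obtain x where x: "x \<in> carrier_vec n" "x \<noteq> 0\<^sub>v n" "E *\<^sub>v x = 0\<^sub>v n" by blast
    have ox: "v j \<bullet> x = 0" if j: "j < k" for j
    proof -
      have "(s - \<mu> j + t) * (v j \<bullet> x) = v j \<bullet> (E *\<^sub>v x)" using vE[OF j x(1)] by simp
      also have "\<dots> = 0" using x(3) vc[OF j] by simp
      finally show ?thesis using tpos[OF j] by simp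
    qed
    hence "inC x" using x by (simp add: inC_def)
    hence "P *\<^sub>v x = 0\<^sub>v n" by (rule Pzero)
    moreover have "t \<cdot>\<^sub>v 0\<^sub>v n = (0\<^sub>v n :: real vec)" by (intro eq_vecI) auto
    moreover have "s \<cdot>\<^sub>v x - A *\<^sub>v x \<in> carrier_vec n" using A x(1) by simp
    ultimately have h: "s \<cdot>\<^sub>v x - A *\<^sub>v x = 0\<^sub>v n" using E_apply[OF x(1)] x(3) by simp
    have Ax: "A *\<^sub>v x = s \<cdot>\<^sub>v x"
    proof (rule eq_vecI)
      fix a assume "a < dim_vec (s \<cdot>\<^sub>v x)" hence a: "a < n" using x by simp
      have "(s \<cdot>\<^sub>v x - A *\<^sub>v x) $ a = 0" using h a by simp
      thus "(A *\<^sub>v x) $ a = (s \<cdot>\<^sub>v x) $ a" using a x A by simp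
    qed (use A x in simp)
    define c where "c = 1 / sqrt (x \<bullet> x)"
    note nx = normalize_vec[OF x(1) x(2), folded c_def]
    have "A *\<^sub>v (c \<cdot>\<^sub>v x) = s \<cdot>\<^sub>v (c \<cdot>\<^sub>v x)"
      using Ax by (simp add: mult_mat_vec[OF A x(1)] smult_smult_assoc mult.commute)
    moreover have "\<forall>i<k. v i \<bullet> (c \<cdot>\<^sub>v x) = 0" using nx(3) vc ox by simp
    ultimately show ?thesis using nx(1,2) by blast
  next
    case False
    hence "det E \<noteq> 0" using det_0_iff_vec_prod_zero[OF E] by blast
    from det_non_zero_imp_unit[OF E this, of undefined]
    obtain D where D: "D \<in> carrier_mat n n" and DE: "D * E = 1\<^sub>m n"
      unfolding Units_def ring_mat_def by auto
    define K where "K = \<bar>s\<bar> + 1 + Fr A"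
    have Kpos: "K > 0" using Fr_nonneg[of A] by (simp add: K_def)
    define q where "q u = s * (u \<bullet> u) - u \<bullet> (A *\<^sub>v u)" for u
    have qnn: "0 \<le> q u" if "inC u" for u using le_s[OF that] by (simp add: q_def)
    have gap: "u \<bullet> (A *\<^sub>v u) \<le> s - 1 / (K * Fr D)" if uC: "inC u" and uu: "u \<bullet> u = 1" for u
    proof -
      have uc: "u \<in> carrier_vec n" using uC by (simp add: inC_def)
      define w where "w = E *\<^sub>v u"
      have Au: "A *\<^sub>v u \<in> carrier_vec n" using A uc by simp
      have "s \<cdot>\<^sub>v u - A *\<^sub>v u \<in> carrier_vec n" using Au uc by simp
      hence w_eq: "w = s \<cdot>\<^sub>v u - A *\<^sub>v u"
        using E_apply[OF uc] Pzero[OF uC] unfolding w_def by simp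
      have wc: "w \<in> carrier_vec n" using E uc by (simp add: w_def)
      have wC: "inC w" using vE wc uC unfolding w_def by (simp add: inC_def)
      have Aw: "A *\<^sub>v w \<in> carrier_vec n" using A wc by simp
      have ex: "q (u + \<tau> \<cdot>\<^sub>v w) = q u + 2 * \<tau> * (w \<bullet> w) + \<tau>^2 * q w" for \<tau>
      proof -
        have one: "(u + \<tau> \<cdot>\<^sub>v w) \<bullet> (u + \<tau> \<cdot>\<^sub>v w) = u \<bullet> u + 2 * \<tau> * (w \<bullet> u) + \<tau>^2 * (w \<bullet> w)"
          using quad_expand[OF one_carrier_mat[of n] _ uc wc, of \<tau>] uc wc by simp
        have two: "(u + \<tau> \<cdot>\<^sub>v w) \<bullet> (A *\<^sub>v (u + \<tau> \<cdot>\<^sub>v w)) = u \<bullet> (A *\<^sub>v u) + 2 * \<tau> * (w \<bullet> (A *\<^sub>v u)) + \<tau>^2 * (w \<bullet> (A *\<^sub>v w))"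
          by (rule quad_expand[OF A sym uc wc])
        have "w \<bullet> w = w \<bullet> (s \<cdot>\<^sub>v u) - w \<bullet> (A *\<^sub>v u)"
          by (subst (2) w_eq) (rule scalar_prod_minus_distrib[OF wc _ Au], use uc in simp)
        also have "w \<bullet> (s \<cdot>\<^sub>v u) = s * (w \<bullet> u)" using wc uc by simp
        finally have ww: "w \<bullet> w = s * (w \<bullet> u) - w \<bullet> (A *\<^sub>v u)" .
        show ?thesis unfolding q_def one two ww by (simp add: algebra_simps)
      qed
      have qw: "q w \<le> K * (w \<bullet> w)"
      proof -
        have "- 2 * (w \<bullet> (A *\<^sub>v w)) \<le> w \<bullet> w + (A *\<^sub>v w) \<bullet> (A *\<^sub>v w)" by (rule two_dot_le(2)[OF wc Aw])
        also have "\<dots> \<le> w \<bullet> w + Fr A * (w \<bullet> w)" using mv_bound[OF A wc] by simp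
        finally have h1: "- (w \<bullet> (A *\<^sub>v w)) \<le> (1 + Fr A) / 2 * (w \<bullet> w)" by (simp add: algebra_simps)
        have h2: "s * (w \<bullet> w) \<le> \<bar>s\<bar> * (w \<bullet> w)" using dot_nonneg[of w] by (intro mult_right_mono) auto
        have h3: "(1 + Fr A) / 2 * (w \<bullet> w) \<le> (1 + Fr A) * (w \<bullet> w)"
          using dot_nonneg[of w] Fr_nonneg[of A] by (intro mult_right_mono) auto
        show ?thesis using h1 h2 h3 unfolding q_def K_def by (simp add: algebra_simps)
      qed
      have inC2: "inC (u + (- 1 / K) \<cdot>\<^sub>v w)"
        using uC wC uc wc vc unfolding inC_def
        by (auto simp: scalar_prod_add_distrib[of _ n])
      have "0 \<le> q u + 2 * (- 1 / K) * (w \<bullet> w) + (- 1 / K)^2 * q w"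
        using qnn[OF inC2] ex by simp
      also have "(- 1 / K)^2 * q w \<le> (- 1 / K)^2 * (K * (w \<bullet> w))"
        by (rule mult_left_mono[OF qw]) simp
      also have "(- 1 / K)^2 * (K * (w \<bullet> w)) = (w \<bullet> w) / K"
        using Kpos by (simp add: power2_eq_square)
      finally have qu: "(w \<bullet> w) / K \<le> q u" by (simp add: algebra_simps)
      have "D *\<^sub>v w = u" unfolding w_def using D E uc DE by (simp add: assoc_mult_mat_vec[symmetric, of D n n E n u])
      hence "1 \<le> Fr D * (w \<bullet> w)" using mv_bound[OF D wc] uu by simp
      hence FD: "Fr D > 0" and wwD: "1 / Fr D \<le> w \<bullet> w"
        using Fr_nonneg[of D] dot_nonneg[of w]
        by (auto simp: divide_le_eq mult.commute intro: ccontr)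
      have "1 / (K * Fr D) = (1 / Fr D) / K" by simp
      also have "\<dots> \<le> (w \<bullet> w) / K" by (rule divide_right_mono[OF wwD]) (use Kpos in simp)
      also have "\<dots> \<le> q u" by (rule qu)
      finally show ?thesis unfolding q_def using uu by simp
    qed
    have FD: "Fr D > 0"
    proof -
      have "inC (c0 \<cdot>\<^sub>v b0)" using nb(2,3) vc b0(3) by (auto simp: inC_def)
      have "1 = (c0 \<cdot>\<^sub>v b0) \<bullet> (c0 \<cdot>\<^sub>v b0)" using nb(1) by simp
      also have "\<dots> = (D *\<^sub>v (E *\<^sub>v (c0 \<cdot>\<^sub>v b0))) \<bullet> (D *\<^sub>v (E *\<^sub>v (c0 \<cdot>\<^sub>v b0)))"
        using D E DE nb(2) by (simp add: assoc_mult_mat_vec[symmetric, of D n n E n])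
      also have "\<dots> \<le> Fr D * ((E *\<^sub>v (c0 \<cdot>\<^sub>v b0)) \<bullet> (E *\<^sub>v (c0 \<cdot>\<^sub>v b0)))"
        using mv_bound[OF D] E nb(2) by simp
      finally have "1 \<le> Fr D * ((E *\<^sub>v (c0 \<cdot>\<^sub>v b0)) \<bullet> (E *\<^sub>v (c0 \<cdot>\<^sub>v b0)))" .
      thus ?thesis using Fr_nonneg[of D] by (cases "Fr D = 0") auto
    qed
    have "Sup S \<le> s - 1 / (K * Fr D)"
    proof (rule cSup_least[OF Sne])
      fix y assume "y \<in> S"
      then obtain u where "inC u" "u \<bullet> u = 1" "y = u \<bullet> (A *\<^sub>v u)" unfolding S_def by blast
      thus "y \<le> s - 1 / (K * Fr D)" using gap by simp
    qed
    moreover have "1 / (K * Fr D) > 0" using Kpos FD by simp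
    ultimately show ?thesis unfolding s_def by simp
  qed
qed

lemma eigenbasis:
  fixes A :: "real mat"
  assumes A: "A \<in> carrier_mat n n" and sym: "transpose_mat A = A"
  shows "k \<le> n \<Longrightarrow> \<exists>v \<mu>. ON n k v \<and> (\<forall>i<k. A *\<^sub>v v i = \<mu> i \<cdot>\<^sub>v v i)"
proof (induction k)
  case 0
  show ?case by (rule exI[of _ "\<lambda>_. 0\<^sub>v n"], rule exI[of _ "\<lambda>_. 0"]) (simp add: ON_def)
next
  case (Suc k)
  then obtain v \<mu> where on: "ON n k v" and ev: "\<forall>i<k. A *\<^sub>v v i = \<mu> i \<cdot>\<^sub>v v i" by auto
  from step[OF A sym on _ , of \<mu>] ev Suc(2)
  obtain x m where x: "x \<in> carrier_vec n" "x \<bullet> x = 1" "\<forall>i<k. v i \<bullet> x = 0" "A *\<^sub>v x = m \<cdot>\<^sub>v x"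
    by auto
  have on': "ON n (Suc k) (v(k := x))" using ON_extend[OF on x(1,2)] x(3) by simp
  have "\<forall>i<Suc k. A *\<^sub>v (v(k := x)) i = (\<mu>(k := m)) i \<cdot>\<^sub>v (v(k := x)) i"
    using ev x(4) by (auto simp: less_Suc_eq)
  with on' show ?case by blast
qed

lemma vec_eq_ON:
  assumes on: "ON n n v" and x: "x \<in> carrier_vec n" and y: "y \<in> carrier_vec n"
    and h: "\<And>j. j < n \<Longrightarrow> v j \<bullet> x = v j \<bullet> y"
  shows "x = y"
proof -
  have "x - y = 0\<^sub>v n"
  proof (rule ON_zero[OF on])
    show "x - y \<in> carrier_vec n" using x y by simp
    fix j assume j: "j < n"
    have "v j \<bullet> (x - y) = v j \<bullet> x - v j \<bullet> y"
      by (rule scalar_prod_minus_distrib[OF ON_carrier[OF on j] x y])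
    thus "v j \<bullet> (x - y) = 0" using h[OF j] by simp
  qed
  show "x = y"
  proof (rule eq_vecI)
    fix a assume "a < dim_vec y" hence a: "a < n" using y by simp
    have "(x - y) $ a = 0" using \<open>x - y = 0\<^sub>v n\<close> a by simp
    thus "x $ a = y $ a" using a x y by simp
  qed (use x y in simp)
qed

lemma spectral:
  fixes A :: "real mat"
  assumes A: "A \<in> carrier_mat n n" and sym: "transpose_mat A = A"
  shows "\<exists>v \<mu>. ON n n v \<and> A = rk1 n n v \<mu> \<and> (\<forall>i<n. A *\<^sub>v v i = \<mu> i \<cdot>\<^sub>v v i)"
proof -
  obtain v \<mu> where on: "ON n n v" and ev: "\<forall>i<n. A *\<^sub>v v i = \<mu> i \<cdot>\<^sub>v v i"
    using eigenbasis[OF A sym, of n] by auto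
  have vc: "v i \<in> carrier_vec n" if "i < n" for i using on that by (simp add: ON_carrier)
  have "A = rk1 n n v \<mu>"
  proof (rule mat_eq_vec[OF A rk1_carrier])
    fix x :: "real vec" assume x: "x \<in> carrier_vec n"
    show "A *\<^sub>v x = rk1 n n v \<mu> *\<^sub>v x"
    proof (rule vec_eq_ON[OF on])
      show "A *\<^sub>v x \<in> carrier_vec n" using A x by auto
      show "rk1 n n v \<mu> *\<^sub>v x \<in> carrier_vec n" using x by (rule mult_mat_vec_carrier[OF rk1_carrier])
      fix j assume j: "j < n"
      have "v j \<bullet> (A *\<^sub>v x) = x \<bullet> (A *\<^sub>v v j)" by (rule sym_dot[OF A sym vc[OF j] x])
      also have "\<dots> = \<mu> j * (x \<bullet> v j)" using ev j vc[OF j] x by simp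
      also have "x \<bullet> v j = v j \<bullet> x" using comm_scalar_prod[of x n "v j"] vc[OF j] x by simp
      also have "\<mu> j * (v j \<bullet> x) = v j \<bullet> (rk1 n n v \<mu> *\<^sub>v x)" by (rule rk1_coef[OF on j x, symmetric])
      finally show "v j \<bullet> (A *\<^sub>v x) = v j \<bullet> (rk1 n n v \<mu> *\<^sub>v x)" .
    qed
  qed
  with on ev show ?thesis by blast
qed

lemma rk1_eigenvalue:
  assumes on: "ON n n v"
  shows "eigenvalue (rk1 n n v \<theta>) k \<longleftrightarrow> (\<exists>i<n. \<theta> i = k)"
proof
  assume "eigenvalue (rk1 n n v \<theta>) k"
  then obtain x where x: "x \<in> carrier_vec n" "x \<noteq> 0\<^sub>v n" "rk1 n n v \<theta> *\<^sub>v x = k \<cdot>\<^sub>v x"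
    unfolding eigenvalue_def eigenvector_def by auto
  show "\<exists>i<n. \<theta> i = k"
  proof (rule ccontr)
    assume ne: "\<not> (\<exists>i<n. \<theta> i = k)"
    have "x = 0\<^sub>v n"
    proof (rule ON_zero[OF on x(1)])
      fix j assume j: "j < n"
      have "\<theta> j * (v j \<bullet> x) = v j \<bullet> (k \<cdot>\<^sub>v x)" using rk1_coef[OF on j x(1), of \<theta>] x(3) by simp
      also have "\<dots> = k * (v j \<bullet> x)" using ON_carrier[OF on j] x(1) by simp
      finally have "(\<theta> j - k) * (v j \<bullet> x) = 0" by (simp add: algebra_simps)
      thus "v j \<bullet> x = 0" using ne j by auto
    qed
    thus False using x(2) by simp
  qed
next
  assume "\<exists>i<n. \<theta> i = k"
  then obtain i where i: "i < n" "\<theta> i = k" by blast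
  have vi: "v i \<in> carrier_vec n" using on i by (simp add: ON_carrier)
  have "v i \<noteq> 0\<^sub>v n" using ON_dot[OF on i(1) i(1)] by auto
  moreover have "rk1 n n v \<theta> *\<^sub>v v i = k \<cdot>\<^sub>v v i"
  proof (rule vec_eq_ON[OF on])
    show "rk1 n n v \<theta> *\<^sub>v v i \<in> carrier_vec n" using vi by (rule mult_mat_vec_carrier[OF rk1_carrier])
    show "k \<cdot>\<^sub>v v i \<in> carrier_vec n" using vi by auto
    fix j assume j: "j < n"
    show "v j \<bullet> (rk1 n n v \<theta> *\<^sub>v v i) = v j \<bullet> (k \<cdot>\<^sub>v v i)"
      using rk1_coef[OF on j vi] ON_dot[OF on j i(1)] ON_carrier[OF on j] vi i by auto
  qed
  ultimately show "eigenvalue (rk1 n n v \<theta>) k"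
    unfolding eigenvalue_def eigenvector_def using vi by auto
qed

lemma rk1_lambda_max:
  assumes on: "ON n n v" and n: "0 < n"
  shows "lambda_max (rk1 n n v \<theta>) = Max (\<theta> ` {..<n})"
proof -
  have "{k. eigenvalue (rk1 n n v \<theta>) k} = \<theta> ` {..<n}"
    using rk1_eigenvalue[OF on] by auto
  thus ?thesis by (simp add: lambda_max_def)
qed

lemma rk1_rayleigh:
  assumes on: "ON n n v" and n: "0 < n" and x: "x \<in> carrier_vec n"
  shows "x \<bullet> (rk1 n n v \<theta> *\<^sub>v x) \<le> Max (\<theta> ` {..<n}) * (x \<bullet> x)"
proof -
  have "x \<bullet> (rk1 n n v \<theta> *\<^sub>v x) = (\<Sum>i<n. \<theta> i * (v i \<bullet> x)^2)" by (rule rk1_quad_sq[OF on x])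
  also have "\<dots> \<le> (\<Sum>i<n. Max (\<theta> ` {..<n}) * (v i \<bullet> x)^2)"
    by (intro sum_mono mult_right_mono) auto
  also have "\<dots> = Max (\<theta> ` {..<n}) * (x \<bullet> x)"
    by (simp add: parseval[OF on x] sum_distrib_left)
  finally show ?thesis .
qed

lemma penrose_AG:
  fixes A G1 G2 :: "real mat"
  assumes A: "A \<in> carrier_mat a b" and G1: "G1 \<in> carrier_mat b a" and G2: "G2 \<in> carrier_mat b a"
    and p1: "A * G1 * A = A" and s1: "transpose_mat (A * G1) = A * G1"
    and p2: "A * G2 * A = A" and s2: "transpose_mat (A * G2) = A * G2"
  shows "A * G1 = A * G2"
proof -
  have At: "transpose_mat A = transpose_mat A * (A * G2)"
  proof -
    have "transpose_mat A = transpose_mat (A * G2 * A)" using p2 by simp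
    also have "\<dots> = transpose_mat A * transpose_mat (A * G2)"
      by (rule transpose_mult[of _ a a]) (use A G2 in auto)
    also have "\<dots> = transpose_mat A * (A * G2)" using s2 by simp
    finally show ?thesis .
  qed
  have "A * G1 = transpose_mat (A * G1)" using s1 by simp
  also have "\<dots> = transpose_mat G1 * transpose_mat A" by (rule transpose_mult[OF A G1])
  also have "\<dots> = transpose_mat G1 * (transpose_mat A * (A * G2))" using At by metis
  also have "\<dots> = (transpose_mat G1 * transpose_mat A) * (A * G2)"
    using assoc_mult_mat[of "transpose_mat G1" a b "transpose_mat A" a "A * G2" a] A G1 G2 by (simp del: assoc_mult_mat)
  also have "transpose_mat G1 * transpose_mat A = A * G1"
    using transpose_mult[OF A G1] s1 by simp
  also have "A * G1 * (A * G2) = (A * G1 * A) * G2"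
    using assoc_mult_mat[of "A * G1" a a A b G2 a] A G1 G2 by (simp del: assoc_mult_mat)
  also have "\<dots> = A * G2" using p1 by simp
  finally show ?thesis .
qed

lemma penrose_GA:
  fixes A G1 G2 :: "real mat"
  assumes A: "A \<in> carrier_mat a b" and G1: "G1 \<in> carrier_mat b a" and G2: "G2 \<in> carrier_mat b a"
    and p1: "A * G1 * A = A" and s1: "transpose_mat (G1 * A) = G1 * A"
    and p2: "A * G2 * A = A" and s2: "transpose_mat (G2 * A) = G2 * A"
  shows "G1 * A = G2 * A"
proof -
  have At: "transpose_mat A = (G2 * A) * transpose_mat A"
  proof -
    have "transpose_mat A = transpose_mat (A * (G2 * A))" using p2 A G2 by simp
    also have "\<dots> = transpose_mat (G2 * A) * transpose_mat A"
      by (rule transpose_mult[of _ a b]) (use A G2 in auto)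
    also have "\<dots> = (G2 * A) * transpose_mat A" using s2 by simp
    finally show ?thesis .
  qed
  have "G1 * A = transpose_mat (G1 * A)" using s1 by simp
  also have "\<dots> = transpose_mat A * transpose_mat G1" by (rule transpose_mult[OF G1 A])
  also have "\<dots> = ((G2 * A) * transpose_mat A) * transpose_mat G1" using At by metis
  also have "\<dots> = (G2 * A) * (transpose_mat A * transpose_mat G1)"
    using assoc_mult_mat[of "G2 * A" b b "transpose_mat A" a "transpose_mat G1" b] A G1 G2 by (simp del: assoc_mult_mat)
  also have "transpose_mat A * transpose_mat G1 = G1 * A"
    using transpose_mult[OF G1 A] s1 by simp
  also have "G2 * A * (G1 * A) = G2 * (A * G1 * A)"
    using assoc_mult_mat[of "G2 * A" b b G1 a A b] assoc_mult_mat[of G2 b a A b "G1 * A" b]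
      assoc_mult_mat[of A a b G1 a A b] A G1 G2 by (simp del: assoc_mult_mat)
  also have "\<dots> = G2 * A" using p1 by simp
  finally show ?thesis .
qed

lemma penrose_unique:
  fixes A G1 G2 :: "real mat"
  assumes A: "A \<in> carrier_mat a b" and G1: "G1 \<in> carrier_mat b a" and G2: "G2 \<in> carrier_mat b a"
    and p1: "A * G1 * A = A" "G1 * A * G1 = G1" "transpose_mat (A * G1) = A * G1" "transpose_mat (G1 * A) = G1 * A"
    and p2: "A * G2 * A = A" "G2 * A * G2 = G2" "transpose_mat (A * G2) = A * G2" "transpose_mat (G2 * A) = G2 * A"
  shows "G1 = G2"
proof -
  have AG: "A * G1 = A * G2" by (rule penrose_AG[OF A G1 G2 p1(1) p1(3) p2(1) p2(3)])
  have GA: "G1 * A = G2 * A" by (rule penrose_GA[OF A G1 G2 p1(1) p1(4) p2(1) p2(4)])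
  have "G1 = G1 * A * G1" using p1 by simp
  also have "\<dots> = G1 * (A * G1)" using A G1 by simp
  also have "\<dots> = G1 * (A * G2)" using AG by simp
  also have "\<dots> = (G1 * A) * G2" using A G1 G2 by simp
  also have "\<dots> = (G2 * A) * G2" using GA by simp
  also have "\<dots> = G2" using p2 by simp
  finally show ?thesis .
qed

lemma quad_coord:
  fixes M :: "real mat"
  assumes M: "M \<in> carrier_mat n n" and x: "x \<in> carrier_vec n"
  shows "x \<bullet> (M *\<^sub>v x) = (\<Sum>a<n. \<Sum>b<n. x $ a * M $$ (a,b) * x $ b)"
  using M x by (simp add: scalar_prod_def row_def lessThan_atLeast0 sum_distrib_left mult_ac)

lemma trace_formula:
  fixes Y :: "real mat"
  assumes Y: "Y \<in> carrier_mat n c" and on: "ON n n u"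
  shows "mtrace (transpose_mat Y * rk1 n n u \<sigma> * Y) =
           (\<Sum>i<n. \<sigma> i * ((transpose_mat Y *\<^sub>v u i) \<bullet> (transpose_mat Y *\<^sub>v u i)))"
proof -
  let ?S = "rk1 n n u \<sigma>"
  have uc: "u i \<in> carrier_vec n" if "i < n" for i using on that by (simp add: ON_carrier)
  have cY: "col Y j \<in> carrier_vec n" if "j < c" for j using Y that by simp
  have entry: "(transpose_mat Y * ?S * Y) $$ (j,j) = (\<Sum>i<n. \<sigma> i * ((transpose_mat Y *\<^sub>v u i) $ j)^2)"
    if j: "j < c" for j
  proof -
    have "transpose_mat Y * ?S * Y = transpose_mat Y * (?S * Y)"
      using assoc_mult_mat[of "transpose_mat Y" c n ?S n Y c] Y by simp
    hence "(transpose_mat Y * ?S * Y) $$ (j,j) = row (transpose_mat Y) j \<bullet> col (?S * Y) j"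
      using Y j by simp
    also have "\<dots> = col Y j \<bullet> (?S *\<^sub>v col Y j)" using Y j col_mult2[of ?S n n Y c j] by simp
    also have "\<dots> = (\<Sum>i<n. \<sigma> i * (u i \<bullet> col Y j)^2)" by (rule rk1_quad_sq[OF on cY[OF j]])
    also have "\<dots> = (\<Sum>i<n. \<sigma> i * ((transpose_mat Y *\<^sub>v u i) $ j)^2)"
    proof (intro sum.cong refl)
      fix i assume "i \<in> {..<n}"
      hence i: "i < n" by simp
      have "(transpose_mat Y *\<^sub>v u i) $ j = col Y j \<bullet> u i" using Y j by simp
      also have "\<dots> = u i \<bullet> col Y j" by (rule comm_scalar_prod[OF cY[OF j] uc[OF i]])
      finally show "\<sigma> i * (u i \<bullet> col Y j)^2 = \<sigma> i * ((transpose_mat Y *\<^sub>v u i) $ j)^2" by simp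
    qed
    finally show ?thesis .
  qed
  have "mtrace (transpose_mat Y * ?S * Y) = (\<Sum>j<c. \<Sum>i<n. \<sigma> i * ((transpose_mat Y *\<^sub>v u i) $ j)^2)"
    unfolding mtrace_def using Y entry by simp
  also have "\<dots> = (\<Sum>i<n. \<Sum>j<c. \<sigma> i * ((transpose_mat Y *\<^sub>v u i) $ j)^2)" by (rule sum.swap)
  also have "\<dots> = (\<Sum>i<n. \<sigma> i * ((transpose_mat Y *\<^sub>v u i) \<bullet> (transpose_mat Y *\<^sub>v u i)))"
  proof (intro sum.cong refl)
    fix i assume "i \<in> {..<n}"
    hence i: "i < n" by simp
    have "transpose_mat Y *\<^sub>v u i \<in> carrier_vec c" using Y uc[OF i] by simp
    thus "(\<Sum>j<c. \<sigma> i * ((transpose_mat Y *\<^sub>v u i) $ j)^2) = \<sigma> i * ((transpose_mat Y *\<^sub>v u i) \<bullet> (transpose_mat Y *\<^sub>v u i))"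
      by (simp add: dot_self sum_distrib_left)
  qed
  finally show ?thesis .
qed

lemma BBt_carrier: "Bl \<in> carrier_mat m sl \<Longrightarrow> Bl * transpose_mat Bl \<in> carrier_mat m m"
  by simp

lemma Nmat_entry:
  assumes B: "\<forall>l\<in>{1..K}. B l \<in> carrier_mat m (s l)" and a: "a < m" and b: "b < m"
  shows "Nmat m K w B $$ (a,b) = (\<Sum>l\<in>{1..K}. w l * (B l * transpose_mat (B l)) $$ (a,b))"
proof -
  have "Nmat m K w B $$ (a,b) = (\<Sum>l\<in>{1..K}. (w l \<cdot>\<^sub>m (B l * transpose_mat (B l))) $$ (a,b))"
    unfolding Nmat_def using a b by simp
  also have "\<dots> = (\<Sum>l\<in>{1..K}. w l * (B l * transpose_mat (B l)) $$ (a,b))"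
  proof (intro sum.cong refl)
    fix l assume l: "l \<in> {1..K}"
    have "B l \<in> carrier_mat m (s l)" using B l by blast
    hence "B l * transpose_mat (B l) \<in> carrier_mat m m" by simp
    hence "dim_row (B l * transpose_mat (B l)) = m" "dim_col (B l * transpose_mat (B l)) = m" by auto
    thus "(w l \<cdot>\<^sub>m (B l * transpose_mat (B l))) $$ (a,b) = w l * (B l * transpose_mat (B l)) $$ (a,b)"
      using a b by simp
  qed
  finally show ?thesis .
qed

lemma Nmat_carrier: "Nmat m K w B \<in> carrier_mat m m"
  by (simp add: Nmat_def)

lemma Nmat_sym:
  assumes B: "\<And>l. l \<in> {1..K} \<Longrightarrow> B l \<in> carrier_mat m (s l)"
  shows "transpose_mat (Nmat m K w B) = Nmat m K w B"
proof (rule eq_matI)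
  fix a b assume a: "a < dim_row (Nmat m K w B)" and b: "b < dim_col (Nmat m K w B)"
  hence a: "a < m" and b: "b < m" by (simp_all add: Nmat_def)
  have sy: "(B l * transpose_mat (B l)) $$ (b,a) = (B l * transpose_mat (B l)) $$ (a,b)" if l: "l \<in> {1..K}" for l
  proof -
    have "transpose_mat (B l * transpose_mat (B l)) = transpose_mat (transpose_mat (B l)) * transpose_mat (B l)"
      by (rule transpose_mult[of _ m "s l" _ m]) (use B[OF l] in auto)
    hence "transpose_mat (B l * transpose_mat (B l)) = B l * transpose_mat (B l)" by simp
    hence "transpose_mat (B l * transpose_mat (B l)) $$ (a,b) = (B l * transpose_mat (B l)) $$ (a,b)" by simp
    thus ?thesis using a b B[OF l] by simp
  qed
  show "transpose_mat (Nmat m K w B) $$ (a,b) = Nmat m K w B $$ (a,b)"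
  proof -
    have B': "\<forall>l\<in>{1..K}. B l \<in> carrier_mat m (s l)" using B by blast
    have "transpose_mat (Nmat m K w B) $$ (a,b) = Nmat m K w B $$ (b,a)"
      using a b by (simp add: Nmat_def)
    also have "\<dots> = (\<Sum>l\<in>{1..K}. w l * (B l * transpose_mat (B l)) $$ (b,a))"
      by (rule Nmat_entry[OF B' b a])
    also have "\<dots> = (\<Sum>l\<in>{1..K}. w l * (B l * transpose_mat (B l)) $$ (a,b))"
      using sy by simp
    also have "\<dots> = Nmat m K w B $$ (a,b)" by (rule Nmat_entry[OF B' a b, symmetric])
    finally show ?thesis .
  qed
qed (simp_all add: Nmat_def)

lemma Nmat_quad:
  assumes B: "\<And>l. l \<in> {1..K} \<Longrightarrow> B l \<in> carrier_mat m (s l)" and x: "x \<in> carrier_vec m"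
  shows "x \<bullet> (Nmat m K w B *\<^sub>v x) =
    (\<Sum>l\<in>{1..K}. w l * ((transpose_mat (B l) *\<^sub>v x) \<bullet> (transpose_mat (B l) *\<^sub>v x)))"
proof -
  let ?C = "\<lambda>l. B l * transpose_mat (B l)"
  have B': "\<forall>l\<in>{1..K}. B l \<in> carrier_mat m (s l)" using B by blast
  have "x \<bullet> (Nmat m K w B *\<^sub>v x) = (\<Sum>a<m. \<Sum>b<m. x $ a * Nmat m K w B $$ (a,b) * x $ b)"
    by (rule quad_coord[OF Nmat_carrier x])
  also have "\<dots> = (\<Sum>a<m. \<Sum>b<m. \<Sum>l\<in>{1..K}. w l * (x $ a * ?C l $$ (a,b) * x $ b))"
    by (intro sum.cong refl) (simp add: Nmat_entry[OF B'] sum_distrib_left sum_distrib_right mult_ac)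
  also have "\<dots> = (\<Sum>a<m. \<Sum>l\<in>{1..K}. \<Sum>b<m. w l * (x $ a * ?C l $$ (a,b) * x $ b))"
    by (rule sum.cong[OF refl], rule sum.swap)
  also have "\<dots> = (\<Sum>l\<in>{1..K}. \<Sum>a<m. \<Sum>b<m. w l * (x $ a * ?C l $$ (a,b) * x $ b))"
    by (rule sum.swap)
  also have "\<dots> = (\<Sum>l\<in>{1..K}. w l * (x \<bullet> (?C l *\<^sub>v x)))"
  proof (intro sum.cong refl)
    fix l assume l: "l \<in> {1..K}"
    have "x \<bullet> (?C l *\<^sub>v x) = (\<Sum>a<m. \<Sum>b<m. x $ a * ?C l $$ (a,b) * x $ b)"
      by (rule quad_coord[OF _ x]) (use B[OF l] in simp)
    thus "(\<Sum>a<m. \<Sum>b<m. w l * (x $ a * ?C l $$ (a,b) * x $ b)) = w l * (x \<bullet> (?C l *\<^sub>v x))"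
      by (simp add: sum_distrib_left)
  qed
  also have "\<dots> = (\<Sum>l\<in>{1..K}. w l * ((transpose_mat (B l) *\<^sub>v x) \<bullet> (transpose_mat (B l) *\<^sub>v x)))"
  proof (intro sum.cong refl)
    fix l assume l: "l \<in> {1..K}"
    have Bl: "B l \<in> carrier_mat m (s l)" by (rule B[OF l])
    have Btx: "transpose_mat (B l) *\<^sub>v x \<in> carrier_vec (s l)" using Bl x by simp
    have "?C l *\<^sub>v x = B l *\<^sub>v (transpose_mat (B l) *\<^sub>v x)"
      using Bl x by (simp add: assoc_mult_mat_vec[of _ m "s l" _ m])
    moreover have "(transpose_mat (B l) *\<^sub>v x) \<bullet> (transpose_mat (B l) *\<^sub>v x) = x \<bullet> (B l *\<^sub>v (transpose_mat (B l) *\<^sub>v x))"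
      by (rule transpose_vec_mult_scalar[OF Bl Btx x])
    ultimately show "w l * (x \<bullet> (?C l *\<^sub>v x)) = w l * ((transpose_mat (B l) *\<^sub>v x) \<bullet> (transpose_mat (B l) *\<^sub>v x))"
      by simp
  qed
  finally show ?thesis .
qed

theorem lemma1:
  fixes m K r :: nat and s :: "nat \<Rightarrow> nat" and B :: "nat \<Rightarrow> real mat"
    and \<alpha> :: real and \<Sigma> X :: "real mat" and w :: "nat \<Rightarrow> real"
  assumes "0 < m" and "0 < K" and "0 < r"
    and B: "\<And>l. l \<in> {1..K} \<Longrightarrow> B l \<in> carrier_mat m (s l)"
    and \<Sigma>: "sym_nnd m \<Sigma>"
    and tr: "\<And>l. l \<in> {1..K} \<Longrightarrow> mtrace (transpose_mat (B l) * \<Sigma> * B l) \<le> \<alpha>"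
    and w_nn: "\<And>l. l \<in> {1..K} \<Longrightarrow> 0 \<le> w l"
    and w_sum: "(\<Sum>l\<in>{1..K}. w l) = 1"
    and X: "X \<in> carrier_mat m r"
    and col: "col_space X \<subseteq> col_space (Nmat m K w B)"
  shows "mtrace (transpose_mat X * \<Sigma> * X)
           \<le> \<alpha> * lambda_max (transpose_mat X * pinv (Nmat m K w B) * X)"
proof -
  note r0 = \<open>0 < r\<close>
  define N where "N = Nmat m K w B"
  have Nc: "N \<in> carrier_mat m m" by (simp add: N_def Nmat_carrier)
  have Nsym: "transpose_mat N = N" unfolding N_def by (rule Nmat_sym[OF B])
  have Nquad: "x \<bullet> (N *\<^sub>v x) = (\<Sum>l\<in>{1..K}. w l * ((transpose_mat (B l) *\<^sub>v x) \<bullet> (transpose_mat (B l) *\<^sub>v x)))"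
    if x: "x \<in> carrier_vec m" for x
    unfolding N_def by (rule Nmat_quad[OF B x])
  have Npsd: "0 \<le> x \<bullet> (N *\<^sub>v x)" if x: "x \<in> carrier_vec m" for x
    unfolding Nquad[OF x] by (intro sum_nonneg mult_nonneg_nonneg w_nn dot_nonneg)
  obtain p \<nu> where pON: "ON m m p" and Nr: "N = rk1 m m p \<nu>" and Nev: "\<forall>i<m. N *\<^sub>v p i = \<nu> i \<cdot>\<^sub>v p i"
    using spectral[OF Nc Nsym] by blast
  have pc: "p i \<in> carrier_vec m" if "i < m" for i using pON that by (simp add: ON_carrier)
  have \<nu>nn: "0 \<le> \<nu> i" if i: "i < m" for i
  proof -
    have "p i \<bullet> (N *\<^sub>v p i) = \<nu> i * (p i \<bullet> p i)" using Nev i pc[OF i] by simp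
    also have "\<dots> = \<nu> i" using ON_dot[OF pON i i] by simp
    finally show ?thesis using Npsd[OF pc[OF i]] by simp
  qed
  define g where "g i = (if \<nu> i = 0 then 0 else 1 / \<nu> i)" for i
  define G where "G = rk1 m m p g"
  have Gc: "G \<in> carrier_mat m m" by (simp add: G_def)
  have gnn: "0 \<le> g i" if "i < m" for i using \<nu>nn[OF that] by (simp add: g_def)
  have NG: "N * G = rk1 m m p (\<lambda>i. \<nu> i * g i)" unfolding Nr G_def by (rule rk1_mult[OF pON])
  have GN: "G * N = rk1 m m p (\<lambda>i. g i * \<nu> i)" unfolding Nr G_def by (rule rk1_mult[OF pON])
  have e1: "(\<lambda>i. \<nu> i * g i * \<nu> i) = \<nu>" by (rule ext) (simp add: g_def)
  have e2: "(\<lambda>i. g i * \<nu> i * g i) = g" by (rule ext) (simp add: g_def)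
  have NGN: "N * G * N = N" unfolding NG using rk1_mult[OF pON, of "\<lambda>i. \<nu> i * g i" \<nu>] e1 Nr by simp
  have GNG: "G * N * G = G" unfolding GN using rk1_mult[OF pON, of "\<lambda>i. g i * \<nu> i" g] e2 G_def by simp
  have NGs: "transpose_mat (N * G) = N * G" unfolding NG by simp
  have GNs: "transpose_mat (G * N) = G * N" unfolding GN by simp
  have pinvN: "pinv N = G"
    unfolding pinv_def
  proof (rule the_equality)
    show "G \<in> carrier_mat (dim_col N) (dim_row N) \<and> N * G * N = N \<and> G * N * G = G \<and>
        transpose_mat (N * G) = N * G \<and> transpose_mat (G * N) = G * N"
      using Gc Nc NGN GNG NGs GNs by simp
  next
    fix G' assume h: "G' \<in> carrier_mat (dim_col N) (dim_row N) \<and> N * G' * N = N \<and> G' * N * G' = G' \<and>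
        transpose_mat (N * G') = N * G' \<and> transpose_mat (G' * N) = G' * N"
    hence G': "G' \<in> carrier_mat m m" using Nc by simp
    show "G' = G" by (rule penrose_unique[OF Nc G' Gc]) (use h NGN GNG NGs GNs in auto)
  qed
  define M where "M = transpose_mat X * G * X"
  have Mc: "M \<in> carrier_mat r r" using X Gc by (simp add: M_def)
  have Msym: "transpose_mat M = M"
  proof -
    have "transpose_mat M = transpose_mat X * transpose_mat (transpose_mat X * G)"
      unfolding M_def by (rule transpose_mult[of _ r m _ r]) (use X Gc in auto)
    also have "transpose_mat (transpose_mat X * G) = transpose_mat G * X"
      using transpose_mult[of "transpose_mat X" r m G m] X Gc by simp
    also have "transpose_mat G = G" by (simp add: G_def)
    also have "transpose_mat X * (G * X) = M" unfolding M_def using X Gc by simp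
    finally show ?thesis .
  qed
  have Mquad: "y \<bullet> (M *\<^sub>v y) = (X *\<^sub>v y) \<bullet> (G *\<^sub>v (X *\<^sub>v y))" if y: "y \<in> carrier_vec r" for y
  proof -
    have Xy: "X *\<^sub>v y \<in> carrier_vec m" using X y by simp
    have a: "G *\<^sub>v (X *\<^sub>v y) \<in> carrier_vec m" using Gc Xy by simp
    have "M *\<^sub>v y = transpose_mat X *\<^sub>v (G *\<^sub>v (X *\<^sub>v y))"
      unfolding M_def using X Gc y assoc_mult_mat_vec[of "transpose_mat X" r m "G * X" r y]
        assoc_mult_mat_vec[of G m m X r y] by simp
    hence "y \<bullet> (M *\<^sub>v y) = y \<bullet> (transpose_mat X *\<^sub>v (G *\<^sub>v (X *\<^sub>v y)))" by simp
    also have "\<dots> = (transpose_mat X *\<^sub>v (G *\<^sub>v (X *\<^sub>v y))) \<bullet> y"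
      by (rule comm_scalar_prod[of _ r]) (use y X a in auto)
    also have "\<dots> = (G *\<^sub>v (X *\<^sub>v y)) \<bullet> (X *\<^sub>v y)" by (rule transpose_vec_mult_scalar[OF X y a])
    also have "\<dots> = (X *\<^sub>v y) \<bullet> (G *\<^sub>v (X *\<^sub>v y))" by (rule comm_scalar_prod[OF a Xy])
    finally show ?thesis .
  qed
  have Gpsd: "0 \<le> a \<bullet> (G *\<^sub>v a)" if a: "a \<in> carrier_vec m" for a
    unfolding G_def rk1_quad_sq[OF pON a] by (intro sum_nonneg mult_nonneg_nonneg gnn) auto
  obtain z \<theta> where zON: "ON r r z" and Mr: "M = rk1 r r z \<theta>" and Mev: "\<forall>i<r. M *\<^sub>v z i = \<theta> i \<cdot>\<^sub>v z i"
    using spectral[OF Mc Msym] by blast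
  define lam where "lam = Max (\<theta> ` {..<r})"
  have lam_eq: "lambda_max M = lam" unfolding lam_def Mr by (rule rk1_lambda_max[OF zON r0])
  have ray: "y \<bullet> (M *\<^sub>v y) \<le> lam * (y \<bullet> y)" if y: "y \<in> carrier_vec r" for y
    unfolding lam_def Mr by (rule rk1_rayleigh[OF zON r0 y])
  have lam_nn: "0 \<le> lam"
  proof -
    have z0: "z 0 \<in> carrier_vec r" using zON r0 by (simp add: ON_carrier)
    have "z 0 \<bullet> (M *\<^sub>v z 0) = \<theta> 0 * (z 0 \<bullet> z 0)" using Mev r0 z0 by simp
    also have "\<dots> = \<theta> 0" using ON_dot[OF zON r0 r0] by simp
    finally have "\<theta> 0 = (X *\<^sub>v z 0) \<bullet> (G *\<^sub>v (X *\<^sub>v z 0))" using Mquad[OF z0] by simp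
    moreover have "0 \<le> (X *\<^sub>v z 0) \<bullet> (G *\<^sub>v (X *\<^sub>v z 0))" using Gpsd X z0 by simp
    moreover have "\<theta> 0 \<le> lam" unfolding lam_def using r0 by (intro Max_ge) auto
    ultimately show ?thesis by simp
  qed
  have key: "(transpose_mat X *\<^sub>v x) \<bullet> (transpose_mat X *\<^sub>v x) \<le> lam * (x \<bullet> (N *\<^sub>v x))"
    if x: "x \<in> carrier_vec m" for x
  proof -
    define y where "y = transpose_mat X *\<^sub>v x"
    have yc: "y \<in> carrier_vec r" using X x by (simp add: y_def)
    have Xy: "X *\<^sub>v y \<in> carrier_vec m" using X yc by simp
    have "X *\<^sub>v y \<in> col_space X" unfolding col_space_def using yc X by auto
    with col obtain zz where zz: "zz \<in> carrier_vec m" "X *\<^sub>v y = N *\<^sub>v zz"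
      unfolding col_space_def N_def using Nmat_carrier[of m K w B] by auto
    define a where "a = G *\<^sub>v (X *\<^sub>v y)"
    have ac: "a \<in> carrier_vec m" using Gc Xy by (simp add: a_def)
    have Na: "N *\<^sub>v a = X *\<^sub>v y"
    proof -
      have "N *\<^sub>v a = N *\<^sub>v (G *\<^sub>v (N *\<^sub>v zz))" unfolding a_def zz(2) ..
      also have "\<dots> = (N * G * N) *\<^sub>v zz" using Nc Gc zz(1)
          assoc_mult_mat_vec[of N m m "G * N" m zz] assoc_mult_mat_vec[of G m m N m zz] by simp
      also have "\<dots> = X *\<^sub>v y" using NGN zz(2) by simp
      finally show ?thesis .
    qed
    have yy: "y \<bullet> y = a \<bullet> (N *\<^sub>v x)"
    proof -
      have "y \<bullet> y = (transpose_mat X *\<^sub>v x) \<bullet> y" by (simp add: y_def)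
      also have "\<dots> = x \<bullet> (X *\<^sub>v y)" by (rule transpose_vec_mult_scalar[OF X yc x])
      also have "\<dots> = x \<bullet> (N *\<^sub>v a)" using Na by simp
      also have "\<dots> = a \<bullet> (N *\<^sub>v x)" by (rule sym_dot[OF Nc Nsym x ac])
      finally show ?thesis .
    qed
    have aNa: "a \<bullet> (N *\<^sub>v a) = y \<bullet> (M *\<^sub>v y)"
    proof -
      have "a \<bullet> (N *\<^sub>v a) = a \<bullet> (X *\<^sub>v y)" using Na by simp
      also have "\<dots> = (X *\<^sub>v y) \<bullet> a" by (rule comm_scalar_prod[OF ac Xy])
      also have "\<dots> = y \<bullet> (M *\<^sub>v y)" unfolding a_def by (rule Mquad[OF yc, symmetric])
      finally show ?thesis .
    qed
    have cs: "(a \<bullet> (N *\<^sub>v x))^2 \<le> (a \<bullet> (N *\<^sub>v a)) * (x \<bullet> (N *\<^sub>v x))"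
    proof -
      have "a \<bullet> (N *\<^sub>v x) = (\<Sum>i<m. \<nu> i * (p i \<bullet> a) * (p i \<bullet> x))"
        unfolding Nr using rk1_quad[OF x ac, of m p \<nu>] pc by (simp add: mult_ac)
      moreover have "a \<bullet> (N *\<^sub>v a) = (\<Sum>i<m. \<nu> i * (p i \<bullet> a)^2)"
        unfolding Nr by (rule rk1_quad_sq[OF pON ac])
      moreover have "x \<bullet> (N *\<^sub>v x) = (\<Sum>i<m. \<nu> i * (p i \<bullet> x)^2)"
        unfolding Nr by (rule rk1_quad_sq[OF pON x])
      ultimately show ?thesis using wcs[of "{..<m}" \<nu> "\<lambda>i. p i \<bullet> a" "\<lambda>i. p i \<bullet> x"] \<nu>nn by simp
    qed
    have h: "(y \<bullet> y)^2 \<le> lam * (y \<bullet> y) * (x \<bullet> (N *\<^sub>v x))"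
    proof -
      have "(y \<bullet> y)^2 \<le> (y \<bullet> (M *\<^sub>v y)) * (x \<bullet> (N *\<^sub>v x))" using cs yy aNa by simp
      also have "\<dots> \<le> (lam * (y \<bullet> y)) * (x \<bullet> (N *\<^sub>v x))"
        by (rule mult_right_mono[OF ray[OF yc] Npsd[OF x]])
      finally show ?thesis by simp
    qed
    show ?thesis
    proof (cases "y \<bullet> y = 0")
      case True
      then show ?thesis using lam_nn Npsd[OF x] unfolding y_def by simp
    next
      case False
      hence pos: "y \<bullet> y > 0" using dot_nonneg[of y] by linarith
      from h have "(y \<bullet> y) * (y \<bullet> y) \<le> (y \<bullet> y) * (lam * (x \<bullet> (N *\<^sub>v x)))"
        by (simp add: power2_eq_square mult_ac)
      hence "y \<bullet> y \<le> lam * (x \<bullet> (N *\<^sub>v x))" using pos by simp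
      thus ?thesis unfolding y_def .
    qed
  qed
  have Sc: "\<Sigma> \<in> carrier_mat m m" and Ssym: "transpose_mat \<Sigma> = \<Sigma>"
    and Spsd: "\<And>v. v \<in> carrier_vec m \<Longrightarrow> 0 \<le> v \<bullet> (\<Sigma> *\<^sub>v v)"
    using \<Sigma> unfolding sym_nnd_def by auto
  obtain u \<sigma> where uON: "ON m m u" and Sr: "\<Sigma> = rk1 m m u \<sigma>" and Sev: "\<forall>i<m. \<Sigma> *\<^sub>v u i = \<sigma> i \<cdot>\<^sub>v u i"
    using spectral[OF Sc Ssym] by blast
  have uc: "u i \<in> carrier_vec m" if "i < m" for i using uON that by (simp add: ON_carrier)
  have \<sigma>nn: "0 \<le> \<sigma> i" if i: "i < m" for i
  proof -
    have "u i \<bullet> (\<Sigma> *\<^sub>v u i) = \<sigma> i * (u i \<bullet> u i)" using Sev i uc[OF i] by simp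
    also have "\<dots> = \<sigma> i" using ON_dot[OF uON i i] by simp
    finally show ?thesis using Spsd[OF uc[OF i]] by simp
  qed
  let ?q = "\<lambda>l i. (transpose_mat (B l) *\<^sub>v u i) \<bullet> (transpose_mat (B l) *\<^sub>v u i)"
  have trB: "mtrace (transpose_mat (B l) * \<Sigma> * B l) = (\<Sum>i<m. \<sigma> i * ?q l i)" if l: "l \<in> {1..K}" for l
    unfolding Sr by (rule trace_formula[OF B[OF l] uON])
  have "mtrace (transpose_mat X * \<Sigma> * X) =
      (\<Sum>i<m. \<sigma> i * ((transpose_mat X *\<^sub>v u i) \<bullet> (transpose_mat X *\<^sub>v u i)))"
    unfolding Sr by (rule trace_formula[OF X uON])
  also have "\<dots> \<le> (\<Sum>i<m. \<sigma> i * (lam * (u i \<bullet> (N *\<^sub>v u i))))"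
    by (intro sum_mono mult_left_mono key uc \<sigma>nn) auto
  also have "\<dots> = (\<Sum>i<m. \<sigma> i * (lam * (\<Sum>l\<in>{1..K}. w l * ?q l i)))"
    by (intro sum.cong refl) (simp add: Nquad[OF uc])
  also have "\<dots> = lam * (\<Sum>i<m. \<Sum>l\<in>{1..K}. w l * (\<sigma> i * ?q l i))"
    by (simp add: sum_distrib_left mult_ac)
  also have "(\<Sum>i<m. \<Sum>l\<in>{1..K}. w l * (\<sigma> i * ?q l i)) = (\<Sum>l\<in>{1..K}. \<Sum>i<m. w l * (\<sigma> i * ?q l i))"
    by (rule sum.swap)
  also have "\<dots> = (\<Sum>l\<in>{1..K}. w l * mtrace (transpose_mat (B l) * \<Sigma> * B l))"
    by (intro sum.cong refl) (simp add: trB sum_distrib_left)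
  also have "\<dots> \<le> (\<Sum>l\<in>{1..K}. w l * \<alpha>)"
    by (intro sum_mono mult_left_mono tr w_nn)
  also have "\<dots> = \<alpha>" using w_sum by (simp add: sum_distrib_right[symmetric])
  finally have "mtrace (transpose_mat X * \<Sigma> * X) \<le> lam * \<alpha>"
    using lam_nn by (simp add: mult_left_mono)
  moreover have "lambda_max (transpose_mat X * pinv (Nmat m K w B) * X) = lam"
    using lam_eq pinvN unfolding M_def N_def by simp
  ultimately show ?thesis by (simp add: mult.commute)
qed

end
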